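(* Assume the standing setup below. Let $x\in X$ and let $s\le t$ be phase change numbers of $X$ with $s_1\le s$. Suppose that $[x]_{s,X}=[x]_{t,X}$ (i.e. $(s,[x]_{s,X})\to(t,[x]_{t,X})$ is a partial layer of $X$) and that $y\in[x]_{s,Y}$. Then $[x]_{s,Y}=[x]_{t,Y}$, i.e. $(s,[x]_{s,Y})\to(t,[x]_{t,Y})$ is a partial layer of $Y$.
   Context: For a finite set $Z\subset\mathbb{R}^n$ and a real number $s\ge 0$, the Vietoris–Rips complex $V_s(Z)$ is the simplicial complex with vertex set $Z$ whose simplices are the nonempty subsets $\sigma\subseteq Z$ with $d(z,z')\le s$ for all $z,z'\in\sigma$ ($d$ the Euclidean distance). For $z\in Z$, $[z]_{s,Z}\subseteq Z$ denotes the set of vertices of the path component of $V_s(Z)$ containing $z$. A partial layer for $Z$ is a pair of parameters $s\le t$ and $z\in Z$ (written as an edge $(s,[z]_{s,Z})\to(t,[z]_{t,Z})$) with $[z]_{s,Z}=[z]_{t,Z}$ as subsets of $Z$. Standing setup: $X\subset\mathbb{R}^n$ is a finite set with at least two points, $y\in\mathbb{R}^n\setminus X$, $Y=X\sqcup\{y\}$. The phase change numbers of $X$ are the distinct values $0=s_0<s_1<\dots<s_k$ of $d(x,x')$ for $x,x'\in X$. There are $x_0\in X$ and a real $r>0$ with $d(y,x_0)<r$ and $r<s_{i+1}-s_i$ for all $0\le i<k$. *)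

theory Defs
  imports "HOL-Analysis.Analysis"
begin

text \<open>Edges of the Vietoris--Rips complex V_s(Z) (its 1-skeleton).  The path
components of a simplicial complex coincide with those of its 1-skeleton.\<close>
definition rips_edges :: "real \<Rightarrow> ('a::metric_space) set \<Rightarrow> ('a \<times> 'a) set" where
  "rips_edges s Z = {(a, b). a \<in> Z \<and> b \<in> Z \<and> dist a b \<le> s}"

definition rips_component :: "real \<Rightarrow> ('a::metric_space) set \<Rightarrow> 'a \<Rightarrow> 'a set" where
  "rips_component s Z z = {w \<in> Z. (z, w) \<in> (rips_edges s Z)\<^sup>*}"

definition phase_change_numbers :: "('a::metric_space) set \<Rightarrow> real set" where
  "phase_change_numbers X = {dist a b | a b. a \<in> X \<and> b \<in> X}"

definition first_phase :: "('a::metric_space) set \<Rightarrow> real" where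
  "first_phase X = Min (phase_change_numbers X - {0})"

end

theory Submission
  imports Defs
begin

lemma keyK:
  fixes X :: "('a::metric_space) set"
  assumes fin: "finite X" and x0: "x0 \<in> X" and dy: "dist y x0 < r"
    and gap: "\<forall>a\<in>phase_change_numbers X. \<forall>b\<in>phase_change_numbers X.
           a < b \<and> (\<forall>c\<in>phase_change_numbers X. \<not> (a < c \<and> c < b)) \<longrightarrow> r < b - a"
    and u: "u \<in> phase_change_numbers X"
    and a: "a \<in> X" and ya: "dist y a \<le> u"
  shows "dist x0 a \<le> u"
proof (rule ccontr)
  assume nle: "\<not> dist x0 a \<le> u"
  define P where "P = phase_change_numbers X"
  have "P = (\<lambda>(p,q). dist p q) ` (X \<times> X)"
    unfolding P_def phase_change_numbers_def by auto
  hence finP: "finite P" using fin by simp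
  define S where "S = {c\<in>P. u < c}"
  have dS: "dist x0 a \<in> S" using nle x0 a unfolding S_def P_def phase_change_numbers_def by force
  have finS: "finite S" using finP unfolding S_def by simp
  define b where "b = Min S"
  have bS: "b \<in> S" using finS dS unfolding b_def using Min_in by blast
  have ble: "b \<le> dist x0 a" using finS dS unfolding b_def by simp
  have nob: "\<forall>c\<in>P. \<not> (u < c \<and> c < b)"
  proof (intro ballI notI)
    fix c assume c: "c \<in> P" "u < c \<and> c < b"
    hence "c \<in> S" unfolding S_def by auto
    hence "b \<le> c" unfolding b_def using finS by simp
    thus False using c by simp
  qed
  have bP: "b \<in> P" and ub: "u < b" using bS unfolding S_def by auto
  have "r < b - u" using gap[unfolded P_def[symmetric]] u[unfolded P_def[symmetric]] bP ub nob by blast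
  moreover have "dist x0 a \<le> dist x0 y + dist y a" by (rule dist_triangle)
  ultimately show False using ble ya dy by (simp add: dist_commute)
qed

lemma keyL:
  fixes X :: "('a::metric_space) set"
  assumes fin: "finite X" and x0: "x0 \<in> X" and dy: "dist y x0 < r"
    and gap: "\<forall>a\<in>phase_change_numbers X. \<forall>b\<in>phase_change_numbers X.
           a < b \<and> (\<forall>c\<in>phase_change_numbers X. \<not> (a < c \<and> c < b)) \<longrightarrow> r < b - a"
    and u: "u \<in> phase_change_numbers X"
    and x: "x \<in> X" and yX: "y \<notin> X"
    and path: "(x, w) \<in> (rips_edges u (insert y X))\<^sup>*"
  shows "(w \<in> X \<longrightarrow> (x, w) \<in> (rips_edges u X)\<^sup>*) \<and> (w = y \<longrightarrow> (x, x0) \<in> (rips_edges u X)\<^sup>*)"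
  using path
proof (induction rule: rtrancl_induct)
  case base
  then show ?case using x yX by auto
next
  case (step w v)
  have K: "\<And>a. a \<in> X \<Longrightarrow> dist y a \<le> u \<Longrightarrow> dist x0 a \<le> u"
    using keyK[OF fin x0 dy gap u] by blast
  from step.hyps(2) have wv: "w \<in> insert y X" "v \<in> insert y X" "dist w v \<le> u"
    unfolding rips_edges_def by auto
  show ?case
  proof (intro conjI impI)
    assume vX: "v \<in> X"
    show "(x, v) \<in> (rips_edges u X)\<^sup>*"
    proof (cases "w \<in> X")
      case True
      hence "(w, v) \<in> rips_edges u X" using vX wv unfolding rips_edges_def by auto
      then show ?thesis using step.IH True by (meson rtrancl.rtrancl_into_rtrancl)
    next
      case False
      hence wy: "w = y" using wv by auto
      hence "(x0, v) \<in> rips_edges u X" using K[OF vX] wv x0 vX unfolding rips_edges_def by auto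
      then show ?thesis using step.IH wy by (meson rtrancl.rtrancl_into_rtrancl)
    qed
  next
    assume vy: "v = y"
    show "(x, x0) \<in> (rips_edges u X)\<^sup>*"
    proof (cases "w \<in> X")
      case True
      have "dist y w \<le> u" using wv vy by (simp add: dist_commute)
      hence "dist x0 w \<le> u" using K True by blast
      hence "(w, x0) \<in> rips_edges u X" using True x0 unfolding rips_edges_def by (auto simp: dist_commute)
      then show ?thesis using step.IH True by (meson rtrancl.rtrancl_into_rtrancl)
    next
      case False
      hence "w = y" using wv by auto
      then show ?thesis using step.IH by auto
    qed
  qed
qed

lemma edges_mono: "s \<le> t \<Longrightarrow> X \<subseteq> Y \<Longrightarrow> rips_edges s X \<subseteq> rips_edges t Y"
  unfolding rips_edges_def by auto

theorem corollary13:
  fixes X :: "(real ^ 'n) set" and y x x0 :: "real ^ 'n" and r s t :: real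
  assumes "finite X" and "card X \<ge> 2"
    and "y \<notin> X"
    and "x0 \<in> X" and "r > 0" and "dist y x0 < r"
    and "\<forall>a\<in>phase_change_numbers X. \<forall>b\<in>phase_change_numbers X.
           a < b \<and> (\<forall>c\<in>phase_change_numbers X. \<not> (a < c \<and> c < b)) \<longrightarrow> r < b - a"
    and "x \<in> X"
    and "s \<in> phase_change_numbers X" and "t \<in> phase_change_numbers X" and "s \<le> t"
    and "first_phase X \<le> s"
    and "rips_component s X x = rips_component t X x"
    and "y \<in> rips_component s (insert y X) x"
  shows "rips_component s (insert y X) x = rips_component t (insert y X) x"
proof
  show "rips_component s (insert y X) x \<subseteq> rips_component t (insert y X) x"
    unfolding rips_component_def
    using rtrancl_mono[OF edges_mono[OF assms(11) order_refl]] by blast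
next
  show "rips_component t (insert y X) x \<subseteq> rips_component s (insert y X) x"
  proof
    fix w assume w: "w \<in> rips_component t (insert y X) x"
    hence wY: "w \<in> insert y X" and p: "(x, w) \<in> (rips_edges t (insert y X))\<^sup>*"
      unfolding rips_component_def by auto
    show "w \<in> rips_component s (insert y X) x"
    proof (cases "w = y")
      case True then show ?thesis using assms(14) by simp
    next
      case False
      hence wX: "w \<in> X" using wY by auto
      have "(x, w) \<in> (rips_edges t X)\<^sup>*"
        using keyL[OF assms(1,4,6,7,10,8,3) p] wX by blast
      hence "w \<in> rips_component t X x" using wX unfolding rips_component_def by auto
      hence "w \<in> rips_component s X x" using assms(13) by simp
      hence "(x, w) \<in> (rips_edges s X)\<^sup>*" unfolding rips_component_def by auto
      hence "(x, w) \<in> (rips_edges s (insert y X))\<^sup>*"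
        using rtrancl_mono[OF edges_mono[OF order_refl, of X "insert y X"]] by blast
      then show ?thesis using wY unfolding rips_component_def by auto
    qed
  qed
qed

end
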